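(* Let $(K_n,\Sigma)$ be a signed complete graph with $n\geq4$, and let $X(\Sigma)$ be the set of edges $vw$ of $K_n$ such that the triangle $uvw$ is even for every $u\in V(K_n)\setminus\{v,w\}$. Then every connected component of the graph on $V(K_n)$ with edge set $X(\Sigma)$ is a complete graph.
   Context: A signed graph is a pair $(G,\Sigma)$ with $G$ a finite simple graph and $\Sigma\subseteq E(G)$ (the odd edges). A triangle $uvw$ is odd (resp. even) if $|\Sigma\cap\{uv,uw,vw\}|$ is odd (resp. even). *)

theory Defs
  imports Main
begin

definition complete_edges :: "'a set \<Rightarrow> 'a set set" where
  "complete_edges V = {e. e \<subseteq> V \<and> card e = 2}"

text \<open>A signed complete graph (K_V, Sigma): Sigma (here S) is a set of edges of K_V (the odd edges).\<close>
definition signed_complete :: "'a set \<Rightarrow> 'a set set \<Rightarrow> bool" where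
  "signed_complete V S \<longleftrightarrow> finite V \<and> S \<subseteq> complete_edges V"

definition even_triangle :: "'a set set \<Rightarrow> 'a \<Rightarrow> 'a \<Rightarrow> 'a \<Rightarrow> bool" where
  "even_triangle S u v w \<longleftrightarrow> even (card (S \<inter> {{u,v},{u,w},{v,w}}))"

definition Xset :: "'a set \<Rightarrow> 'a set set \<Rightarrow> 'a set set" where
  "Xset V S = {e \<in> complete_edges V. \<forall>v w. e = {v,w} \<longrightarrow>
       (\<forall>u \<in> V - {v,w}. even_triangle S u v w)}"

definition adj :: "'a set set \<Rightarrow> 'a \<Rightarrow> 'a \<Rightarrow> bool" where
  "adj F x y \<longleftrightarrow> {x,y} \<in> F"

definition components_complete :: "'a set \<Rightarrow> 'a set set \<Rightarrow> bool" where
  "components_complete V F \<longleftrightarrow>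
     (\<forall>x\<in>V. \<forall>y\<in>V. x \<noteq> y \<longrightarrow> (adj F)\<^sup>*\<^sup>* x y \<longrightarrow> {x,y} \<in> F)"

end

theory Submission
  imports Defs
begin

lemma et_sym: "even_triangle S u v w = even_triangle S u w v"
  unfolding even_triangle_def by (simp add: insert_commute)

lemma et_perm: "even_triangle S u v w = even_triangle S v u w"
  unfolding even_triangle_def by (simp add: insert_commute)

lemma card3:
  assumes "a \<noteq> b" "a \<noteq> c" "b \<noteq> c"
  shows "even (card (S \<inter> {a,b,c})) \<longleftrightarrow> \<not> ((a\<in>S) \<longleftrightarrow> ((b\<in>S) \<longleftrightarrow> (c\<in>S)))"
proof (cases "a \<in> S"; cases "b \<in> S"; cases "c \<in> S")
  assume "a \<in> S" "b \<in> S" "c \<in> S"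
  then have "S \<inter> {a,b,c} = {a,b,c}" by auto
  then show ?thesis using assms \<open>a \<in> S\<close> \<open>b \<in> S\<close> \<open>c \<in> S\<close> by simp
next
  assume "a \<in> S" "b \<in> S" "c \<notin> S"
  then have "S \<inter> {a,b,c} = {a,b}" by auto
  then show ?thesis using assms \<open>a \<in> S\<close> \<open>b \<in> S\<close> \<open>c \<notin> S\<close> by simp
next
  assume "a \<in> S" "b \<notin> S" "c \<in> S"
  then have "S \<inter> {a,b,c} = {a,c}" by auto
  then show ?thesis using assms \<open>a \<in> S\<close> \<open>b \<notin> S\<close> \<open>c \<in> S\<close> by simp
next
  assume "a \<in> S" "b \<notin> S" "c \<notin> S"
  then have "S \<inter> {a,b,c} = {a}" by auto
  then show ?thesis using assms \<open>a \<in> S\<close> \<open>b \<notin> S\<close> \<open>c \<notin> S\<close> by simp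
next
  assume "a \<notin> S" "b \<in> S" "c \<in> S"
  then have "S \<inter> {a,b,c} = {b,c}" by auto
  then show ?thesis using assms \<open>a \<notin> S\<close> \<open>b \<in> S\<close> \<open>c \<in> S\<close> by simp
next
  assume "a \<notin> S" "b \<in> S" "c \<notin> S"
  then have "S \<inter> {a,b,c} = {b}" by auto
  then show ?thesis using assms \<open>a \<notin> S\<close> \<open>b \<in> S\<close> \<open>c \<notin> S\<close> by simp
next
  assume "a \<notin> S" "b \<notin> S" "c \<in> S"
  then have "S \<inter> {a,b,c} = {c}" by auto
  then show ?thesis using assms \<open>a \<notin> S\<close> \<open>b \<notin> S\<close> \<open>c \<in> S\<close> by simp
next
  assume "a \<notin> S" "b \<notin> S" "c \<notin> S"
  then have "S \<inter> {a,b,c} = {}" by auto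
  then show ?thesis using assms \<open>a \<notin> S\<close> \<open>b \<notin> S\<close> \<open>c \<notin> S\<close> by simp
qed

lemma et_xor:
  assumes "u \<noteq> v" "u \<noteq> w" "v \<noteq> w"
  shows "even_triangle S u v w \<longleftrightarrow> \<not> (({u,v}\<in>S) \<longleftrightarrow> (({u,w}\<in>S) \<longleftrightarrow> ({v,w}\<in>S)))"
proof -
  have d: "{u,v} \<noteq> {u,w}" "{u,v} \<noteq> {v,w}" "{u,w} \<noteq> {v,w}"
    using assms by (auto simp: doubleton_eq_iff)
  show ?thesis unfolding even_triangle_def by (rule card3[OF d])
qed

lemma X_char:
  assumes "v \<in> V" "w \<in> V" "v \<noteq> w"
  shows "{v,w} \<in> Xset V S \<longleftrightarrow> (\<forall>u\<in>V-{v,w}. even_triangle S u v w)"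
proof
  assume "{v,w} \<in> Xset V S" thus "\<forall>u\<in>V-{v,w}. even_triangle S u v w"
    unfolding Xset_def by blast
next
  assume h: "\<forall>u\<in>V-{v,w}. even_triangle S u v w"
  have "{v,w} \<in> complete_edges V" using assms by (simp add: complete_edges_def)
  moreover have "\<forall>a b. {v,w} = {a,b} \<longrightarrow> (\<forall>u \<in> V - {a,b}. even_triangle S u a b)"
  proof (intro allI impI)
    fix a b assume "{v,w} = {a,b}"
    hence "(a = v \<and> b = w) \<or> (a = w \<and> b = v)" by (auto simp: doubleton_eq_iff)
    thus "\<forall>u \<in> V - {a,b}. even_triangle S u a b" proof
      assume "a = v \<and> b = w" thus ?thesis using h by simp
    next
      assume "a = w \<and> b = v" thus ?thesis using h et_sym by (metis insert_commute)
    qed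
  qed
  ultimately show "{v,w} \<in> Xset V S" unfolding Xset_def by blast
qed

lemma X_edge:
  assumes "{x,y} \<in> Xset V S"
  shows "x \<in> V" "y \<in> V" "x \<noteq> y"
  using assms unfolding Xset_def complete_edges_def by (auto simp: card_insert_if split: if_splits)

lemma X_trans:
  assumes "{v,w} \<in> Xset V S" "{w,x} \<in> Xset V S" "v \<noteq> x"
  shows "{v,x} \<in> Xset V S"
proof -
  have V: "v \<in> V" "w \<in> V" "x \<in> V" "v \<noteq> w" "w \<noteq> x"
    using X_edge[OF assms(1)] X_edge[OF assms(2)] by auto
  have A: "\<forall>u\<in>V-{v,w}. even_triangle S u v w" using X_char[OF V(1) V(2) V(4)] assms(1) by blast
  have B: "\<forall>u\<in>V-{w,x}. even_triangle S u w x" using X_char[OF V(2) V(3) V(5)] assms(2) by blast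
  have "\<forall>u\<in>V-{v,x}. even_triangle S u v x"
  proof
    fix u assume u: "u \<in> V - {v,x}"
    show "even_triangle S u v x"
    proof (cases "u = w")
      case True
      have "even_triangle S v w x" using B V assms(3) by auto
      then show ?thesis using True et_perm by metis
    next
      case False
      have 1: "even_triangle S u v w" using A u False by auto
      have 2: "even_triangle S u w x" using B u False by auto
      have 3: "even_triangle S v w x" using B V assms(3) by auto
      have d: "u \<noteq> v" "u \<noteq> x" "u \<noteq> w" using u False by auto
      have e: "{w,u} = {u,w}" "{x,u} = {u,x}" "{w,v} = {v,w}" "{x,v} = {v,x}" "{x,w} = {w,x}"
        by (auto simp: insert_commute)
      have 1: "\<not> (({u,v}\<in>S) \<longleftrightarrow> (({u,w}\<in>S) \<longleftrightarrow> ({v,w}\<in>S)))"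
        using 1 et_xor[OF d(1) d(3) V(4)] by blast
      have 2: "\<not> (({u,w}\<in>S) \<longleftrightarrow> (({u,x}\<in>S) \<longleftrightarrow> ({w,x}\<in>S)))"
        using 2 et_xor[OF d(3) d(2) V(5)] by blast
      have 3: "\<not> (({v,w}\<in>S) \<longleftrightarrow> (({v,x}\<in>S) \<longleftrightarrow> ({w,x}\<in>S)))"
        using 3 et_xor[OF V(4) assms(3) V(5)] by blast
      have "\<not> (({u,v}\<in>S) \<longleftrightarrow> (({u,x}\<in>S) \<longleftrightarrow> ({v,x}\<in>S)))"
        using 1 2 3 by argo
      thus ?thesis using et_xor[OF d(1) d(2) assms(3)] by blast
    qed
  qed
  thus ?thesis using X_char[OF V(1) V(3) assms(3)] by blast
qed

theorem lemma3p3: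
  fixes V :: "'a set" and S :: "'a set set"
  assumes "signed_complete V S"
    and "card V \<ge> 4"
  shows "components_complete V (Xset V S)"
proof -
  have "\<And>y. (adj (Xset V S))\<^sup>*\<^sup>* x y \<Longrightarrow> x = y \<or> {x,y} \<in> Xset V S" for x
  proof -
    fix y assume "(adj (Xset V S))\<^sup>*\<^sup>* x y"
    thus "x = y \<or> {x,y} \<in> Xset V S"
    proof induction
      case base then show ?case by simp
    next
      case (step y z)
      have yz: "{y,z} \<in> Xset V S" using step(2) by (simp add: adj_def)
      show ?case
      proof (cases "x = y")
        case True then show ?thesis using yz by simp
      next
        case False
        then have xy: "{x,y} \<in> Xset V S" using step(3) by simp
        show ?thesis
        proof (cases "x = z")
          case True then show ?thesis by simp
        next
          case False then show ?thesis using X_trans[OF xy yz False] by simp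
        qed
      qed
    qed
  qed
  thus ?thesis unfolding components_complete_def by blast
qed

end
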